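(* Let $q$ be a prime, let $m \geq 1$ be an integer, and let $u$ be an integer with $0 \leq u \leq q-2$. Let $\mathcal{RM}_q(u,m) \subseteq \mathbb{F}_q^{q^m}$ be the code consisting of the vectors $\left(f(\alpha)\right)_{\alpha \in \mathbb{F}_q^m}$ (coordinates indexed by the $q^m$ points of $\mathbb{F}_q^m$ in a fixed order), where $f$ ranges over all polynomials in $\mathbb{F}_q[x_1,\ldots,x_m]$ of total degree at most $u$, and let $\mathcal{RM}^{\perp}_q(u,m)$ be its dual code with respect to the standard bilinear form $\langle \mathbf{x},\mathbf{y}\rangle=\sum_i x_i y_i$. Then for every codeword $\mathbf{c}$ of $\mathcal{RM}^{\perp}_q(u,m)$ of minimum nonzero Hamming weight, the $u+2$ points of $\mathbb{F}_q^m$ indexing the support of $\mathbf{c}$ lie on an affine line: that is, they can be written as $\mathbf{p}_1, \mathbf{p}_1 + t_1\mathbf{h}, \ldots, \mathbf{p}_1 + t_{u+1}\mathbf{h}$ for some $\mathbf{p}_1 \in \mathbb{F}_q^m$, some direction $\mathbf{h} \in \mathbb{F}_q^m \setminus \{\mathbf{0}\}$, and distinct nonzero elements $t_1,\ldots,t_{u+1} \in \mathbb{F}_q$.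
   Context: The support of a vector is the set of coordinates where it is nonzero; since coordinates are indexed by points of $\mathbb{F}_q^m$, the support is identified with a set of points of $\mathbb{F}_q^m$. For $u \leq q-2$ the minimum Hamming distance (minimum nonzero weight) of $\mathcal{RM}^{\perp}_q(u,m)$ equals $u+2$ (a known consequence of the Delsarte–Goethals–MacWilliams formula for the minimum distance of generalized Reed–Muller codes, using that $\mathcal{RM}^{\perp}_q(u,m)=\mathcal{RM}_q(m(q-1)-u-1,m)$). *)

theory Defs
  imports "HOL-Analysis.Finite_Cartesian_Product" "HOL-Computational_Algebra.Primes"
begin

text \<open>Points of F_q^m are vectors of type 'a ^ 'n with 'a a finite field of
prime order q and CARD('n) = m.  A word of length q^m is a function from points
to 'a (coordinates indexed by the points).\<close>

definition exps :: "nat \<Rightarrow> ('n::finite \<Rightarrow> nat) set" where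
  "exps u = {e. (\<Sum>i\<in>UNIV. e i) \<le> u}"

definition poly_eval :: "nat \<Rightarrow> (('n::finite \<Rightarrow> nat) \<Rightarrow> 'a::field) \<Rightarrow> 'a ^ 'n \<Rightarrow> 'a" where
  "poly_eval u c \<alpha> = (\<Sum>e\<in>exps u. c e * (\<Prod>i\<in>UNIV. (\<alpha> $ i) ^ (e i)))"

definition RM :: "nat \<Rightarrow> ('a::{finite,field} ^ 'n::finite \<Rightarrow> 'a) set" where
  "RM u = {poly_eval u c | c. True}"

definition RM_dual :: "nat \<Rightarrow> ('a::{finite,field} ^ 'n::finite \<Rightarrow> 'a) set" where
  "RM_dual u = {y. \<forall>x\<in>RM u. (\<Sum>\<alpha>\<in>UNIV. x \<alpha> * y \<alpha>) = 0}"

definition supp :: "('b \<Rightarrow> 'a::zero) \<Rightarrow> 'b set" where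
  "supp c = {\<alpha>. c \<alpha> \<noteq> 0}"

definition hweight :: "('b \<Rightarrow> 'a::zero) \<Rightarrow> nat" where
  "hweight c = card (supp c)"

end

theory Submission
  imports Defs "HOL-Library.FuncSet"
begin

definition mon :: "('n::finite \<Rightarrow> nat) \<Rightarrow> 'a::field ^ 'n \<Rightarrow> 'a" where
  "mon e \<alpha> = (\<Prod>i\<in>UNIV. (\<alpha> $ i) ^ (e i))"

lemma finite_exps: "finite (exps d :: ('n::finite \<Rightarrow> nat) set)"
proof -
  have "exps d \<subseteq> Pi\<^sub>E UNIV (\<lambda>_::'n. {..d})"
  proof
    fix e :: "'n \<Rightarrow> nat" assume "e \<in> exps d"
    hence s: "(\<Sum>i\<in>UNIV. e i) \<le> d" by (simp add: exps_def)
    have "e i \<le> d" for i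
      using member_le_sum[of i UNIV e] s by simp
    thus "e \<in> Pi\<^sub>E UNIV (\<lambda>_::'n. {..d})" by (simp add: PiE_UNIV_domain)
  qed
  moreover have "finite (Pi\<^sub>E UNIV (\<lambda>_::'n. {..d}))" by (rule finite_PiE) auto
  ultimately show ?thesis by (rule finite_subset)
qed

lemma poly_eval_mon: "poly_eval u c \<alpha> = (\<Sum>e\<in>exps u. c e * mon e \<alpha>)"
  by (simp add: poly_eval_def mon_def)

lemma RM_sumI:
  fixes g :: "'j \<Rightarrow> ('n::finite \<Rightarrow> nat)" and a :: "'j \<Rightarrow> 'a::{finite,field}"
  assumes "finite J" "\<And>j. j \<in> J \<Longrightarrow> g j \<in> exps d"
  shows "(\<lambda>\<alpha>::'a^'n. \<Sum>j\<in>J. a j * mon (g j) \<alpha>) \<in> RM d"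
proof -
  let ?c = "\<lambda>e. \<Sum>j\<in>{j. j\<in>J \<and> g j = e}. a j"
  have "poly_eval d ?c \<alpha> = (\<Sum>j\<in>J. a j * mon (g j) \<alpha>)" for \<alpha> :: "'a^'n"
  proof -
    have "poly_eval d ?c \<alpha> = (\<Sum>e\<in>exps d. \<Sum>j\<in>{j. j\<in>J \<and> g j = e}. a j * mon (g j) \<alpha>)"
      unfolding poly_eval_mon sum_distrib_right by (intro sum.cong refl) auto
    also have "\<dots> = (\<Sum>j\<in>J. a j * mon (g j) \<alpha>)"
      by (rule sum.group) (use assms finite_exps in auto)
    finally show ?thesis .
  qed
  thus ?thesis unfolding RM_def by (auto intro!: exI[of _ ?c])
qed

lemma RM_E: assumes "f \<in> RM d" obtains c where "f = poly_eval d c"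
  using assms unfolding RM_def by auto

lemma exps_mono: "d \<le> d' \<Longrightarrow> exps d \<subseteq> exps d'"
  unfolding exps_def by auto

lemma RM_mono:
  assumes "f \<in> (RM d :: ('a::{finite,field}^'n::finite \<Rightarrow> 'a) set)" "d \<le> d'"
  shows "f \<in> RM d'"
proof -
  obtain c where f: "f = poly_eval d c" using assms(1) by (rule RM_E)
  have "(\<lambda>\<alpha>::'a^'n. \<Sum>e\<in>exps d. c e * mon (id e) \<alpha>) \<in> RM d'"
    by (rule RM_sumI) (use finite_exps exps_mono[OF assms(2)] in auto)
  thus ?thesis using f by (simp add: poly_eval_mon[abs_def])
qed

lemma RM_add:
  assumes "f \<in> (RM d :: ('a::{finite,field}^'n::finite \<Rightarrow> 'a) set)" "g \<in> RM d"
  shows "(\<lambda>\<alpha>. f \<alpha> + g \<alpha>) \<in> RM d"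
proof -
  obtain c where f: "f = poly_eval d c" using assms(1) by (rule RM_E)
  obtain c' where g: "g = poly_eval d c'" using assms(2) by (rule RM_E)
  have "(\<lambda>\<alpha>. f \<alpha> + g \<alpha>) = poly_eval d (\<lambda>e. c e + c' e)"
    unfolding f g poly_eval_mon by (auto simp: sum.distrib algebra_simps)
  thus ?thesis unfolding RM_def by auto
qed

lemma RM_scale:
  assumes "f \<in> (RM d :: ('a::{finite,field}^'n::finite \<Rightarrow> 'a) set)"
  shows "(\<lambda>\<alpha>. k * f \<alpha>) \<in> RM d"
proof -
  obtain c where f: "f = poly_eval d c" using assms(1) by (rule RM_E)
  have "(\<lambda>\<alpha>. k * f \<alpha>) = poly_eval d (\<lambda>e. k * c e)"
    unfolding f poly_eval_mon by (auto simp: sum_distrib_left algebra_simps)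
  thus ?thesis unfolding RM_def by auto
qed

lemma mon_zero: "mon (\<lambda>_. 0) \<alpha> = 1"
  by (simp add: mon_def)

lemma RM_const: "(\<lambda>\<alpha>::'a::{finite,field}^'n::finite. k) \<in> RM d"
proof -
  have "(\<lambda>\<alpha>::'a^'n. \<Sum>j\<in>{()}. k * mon ((\<lambda>_. 0)::'n\<Rightarrow>nat) \<alpha>) \<in> RM d"
    by (rule RM_sumI) (auto simp: exps_def)
  thus ?thesis by (simp add: mon_zero)
qed

lemma RM_coord: "(\<lambda>\<alpha>::'a::{finite,field}^'n::finite. \<alpha> $ i) \<in> RM 1"
proof -
  let ?e = "\<lambda>j::'n. if j = i then 1 else (0::nat)"
  have m: "mon ?e \<alpha> = \<alpha> $ i" for \<alpha> :: "'a^'n"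
  proof -
    have "mon ?e \<alpha> = (\<Prod>j\<in>UNIV. if j = i then \<alpha> $ i else 1)"
      unfolding mon_def by (intro prod.cong) auto
    thus ?thesis by simp
  qed
  have "(\<lambda>\<alpha>::'a^'n. \<Sum>j\<in>{()}. 1 * mon ?e \<alpha>) \<in> RM 1"
    by (rule RM_sumI) (auto simp: exps_def)
  thus ?thesis by (simp add: m)
qed

lemma RM_mult:
  assumes "f \<in> (RM d1 :: ('a::{finite,field}^'n::finite \<Rightarrow> 'a) set)" "g \<in> RM d2"
  shows "(\<lambda>\<alpha>. f \<alpha> * g \<alpha>) \<in> RM (d1 + d2)"
proof -
  obtain c where f: "f = poly_eval d1 c" using assms(1) by (rule RM_E)
  obtain c' where g: "g = poly_eval d2 c'" using assms(2) by (rule RM_E)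
  have "(\<lambda>\<alpha>::'a^'n. \<Sum>p\<in>exps d1 \<times> exps d2. (c (fst p) * c' (snd p)) * mon (\<lambda>i. fst p i + snd p i) \<alpha>) \<in> RM (d1+d2)"
    by (rule RM_sumI) (use finite_exps[of d1] finite_exps[of d2] in \<open>auto simp: exps_def sum.distrib intro: add_mono\<close>)
  moreover have "(\<lambda>\<alpha>. f \<alpha> * g \<alpha>) = (\<lambda>\<alpha>::'a^'n. \<Sum>p\<in>exps d1 \<times> exps d2. (c (fst p) * c' (snd p)) * mon (\<lambda>i. fst p i + snd p i) \<alpha>)"
  proof
    fix \<alpha> :: "'a^'n"
    show "f \<alpha> * g \<alpha> = (\<Sum>p\<in>exps d1 \<times> exps d2. (c (fst p) * c' (snd p)) * mon (\<lambda>i. fst p i + snd p i) \<alpha>)"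
      unfolding f g poly_eval_mon sum_product sum.cartesian_product
      by (intro sum.cong refl) (simp add: mon_def power_add prod.distrib mult_ac split: prod.splits)
  qed
  ultimately show ?thesis by simp
qed

lemma RM_prod:
  assumes "finite A" "\<And>s. s \<in> A \<Longrightarrow> f s \<in> (RM 1 :: ('a::{finite,field}^'n::finite \<Rightarrow> 'a) set)"
  shows "(\<lambda>\<alpha>. \<Prod>s\<in>A. f s \<alpha>) \<in> RM (card A)"
  using assms
proof (induction A rule: finite_induct)
  case empty thus ?case using RM_const[of 1] by simp
next
  case (insert x F)
  have "(\<lambda>\<alpha>. f x \<alpha> * (\<Prod>s\<in>F. f s \<alpha>)) \<in> RM (1 + card F)"
    by (rule RM_mult) (use insert in auto)
  thus ?case using insert by simp
qed


lemma dual_kill: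
  fixes y :: "'a::{finite,field}^'n::finite \<Rightarrow> 'a"
  assumes "y \<in> RM_dual u" "f \<in> RM u" "p \<in> supp y"
    and "\<And>s. s \<in> supp y \<Longrightarrow> s \<noteq> p \<Longrightarrow> f s = 0" and "f p \<noteq> 0"
  shows False
proof -
  have "(\<Sum>\<alpha>\<in>UNIV. f \<alpha> * y \<alpha>) = 0" using assms(1,2) unfolding RM_dual_def by auto
  moreover have "(\<Sum>\<alpha>\<in>UNIV. f \<alpha> * y \<alpha>) = (\<Sum>\<alpha>\<in>UNIV. if \<alpha> = p then f p * y p else 0)"
    by (intro sum.cong refl) (use assms(4) in \<open>auto simp: supp_def\<close>)
  moreover have "f p * y p \<noteq> 0" using assms(3,5) by (simp add: supp_def)
  ultimately show False by simp
qed

lemma lin_RM: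
  "(\<lambda>\<alpha>::'a::{finite,field}^'n::finite. \<alpha> $ i - b) \<in> RM 1"
proof -
  have "(\<lambda>\<alpha>::'a^'n. \<alpha> $ i + (- b)) \<in> RM 1" by (intro RM_add RM_coord RM_const)
  thus ?thesis by simp
qed

lemma LB:
  fixes y :: "'a::{finite,field}^'n::finite \<Rightarrow> 'a"
  assumes "y \<in> RM_dual u" "y \<noteq> (\<lambda>_. 0)"
  shows "u + 2 \<le> card (supp y)"
proof (rule ccontr)
  let ?S = "supp y"
  assume "\<not> ?thesis"
  hence c: "card ?S \<le> u + 1" by simp
  obtain p where p: "p \<in> ?S" using assms(2) by (auto simp: supp_def)
  define I where "I s = (SOME i. s $ i \<noteq> p $ i)" for s
  have I: "s $ I s \<noteq> p $ I s" if "s \<noteq> p" for s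
    unfolding I_def by (rule someI_ex) (use that in \<open>auto simp: vec_eq_iff\<close>)
  define f where "f \<alpha> = (\<Prod>s\<in>?S-{p}. \<alpha> $ I s - s $ I s)" for \<alpha>
  have "f \<in> RM (card (?S-{p}))" unfolding f_def by (intro RM_prod lin_RM) auto
  moreover have "card (?S-{p}) \<le> u" using c p by simp
  ultimately have fR: "f \<in> RM u" by (rule RM_mono)
  show False
  proof (rule dual_kill[OF assms(1) fR p])
    show "f s = 0" if "s \<in> ?S" "s \<noteq> p" for s
      unfolding f_def using that by (intro prod_zero) auto
    show "f p \<noteq> 0" unfolding f_def using I by (auto dest: sym)
  qed
qed

lemma collinear3:
  fixes y :: "'a::{finite,field}^'n::finite \<Rightarrow> 'a"
  assumes "y \<in> RM_dual u" "card (supp y) = u + 2"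
    and "p \<in> supp y" "q1 \<in> supp y" "q2 \<in> supp y" "p \<noteq> q1" "p \<noteq> q2" "q1 \<noteq> q2"
  shows "\<exists>r. p - q1 = r *s (q2 - q1)"
proof (rule ccontr)
  let ?S = "supp y"
  assume nr: "\<not> ?thesis"
  define v where "v = q2 - q1"
  define w where "w = p - q1"
  have "v \<noteq> 0" using assms(8) by (simp add: v_def)
  then obtain i where vi: "v $ i \<noteq> 0" by (auto simp: vec_eq_iff)
  define w' where "w' = w - (w $ i / v $ i) *s v"
  have "w' \<noteq> 0"
  proof
    assume "w' = 0"
    hence "p - q1 = (w $ i / v $ i) *s (q2 - q1)" by (simp add: w'_def w_def v_def)
    thus False using nr by blast
  qed
  then obtain j where wj: "w' $ j \<noteq> 0" by (auto simp: vec_eq_iff)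
  define l where "l \<alpha> = (\<alpha> $ j + (- q1 $ j)) + (- (v $ j / v $ i)) * (\<alpha> $ i + (- q1 $ i))" for \<alpha> :: "'a^'n"
  have lR: "l \<in> RM 1" unfolding l_def[abs_def] by (intro RM_add RM_scale RM_coord RM_const)
  have lq1: "l q1 = 0" by (simp add: l_def)
  have lq2: "l q2 = 0" using vi by (simp add: l_def v_def field_simps)
  have lp: "l p \<noteq> 0" using wj vi by (simp add: l_def w'_def w_def v_def field_simps)
  define I where "I s = (SOME i. s $ i \<noteq> p $ i)" for s
  have I: "s $ I s \<noteq> p $ I s" if "s \<noteq> p" for s
    unfolding I_def by (rule someI_ex) (use that in \<open>auto simp: vec_eq_iff\<close>)
  define f where "f \<alpha> = l \<alpha> * (\<Prod>s\<in>?S-{p,q1,q2}. \<alpha> $ I s - s $ I s)" for \<alpha>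
  have "f \<in> RM (1 + card (?S-{p,q1,q2}))" unfolding f_def[abs_def]
    by (intro RM_mult lR RM_prod lin_RM) auto
  moreover have "card (?S-{p,q1,q2}) = u + 2 - 3"
    using assms by (subst card_Diff_subset) auto
  moreover have "card ?S \<ge> 3"
  proof -
    have "card {p,q1,q2} \<le> card ?S" by (rule card_mono) (use assms in auto)
    thus ?thesis using assms(6-8) by simp
  qed
  ultimately have fR: "f \<in> RM u" using assms(2) by (auto elim: RM_mono)
  show False
  proof (rule dual_kill[OF assms(1) fR assms(3)])
    show "f s = 0" if "s \<in> ?S" "s \<noteq> p" for s
    proof (cases "s = q1 \<or> s = q2")
      case True thus ?thesis using lq1 lq2 by (auto simp: f_def)
    next
      case False thus ?thesis unfolding f_def using that by (auto intro!: prod_zero)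
    qed
    show "f p \<noteq> 0" unfolding f_def using I lp by (auto dest: sym)
  qed
qed

lemma exists_light:
  assumes "prime (CARD('a::{finite,field}))" "u \<le> CARD('a) - 2"
  shows "\<exists>y :: 'a ^ 'n::finite \<Rightarrow> 'a. y \<in> RM_dual u \<and> y \<noteq> (\<lambda>_. 0) \<and> hweight y \<le> u + 2"
proof -
  let ?q = "CARD('a)"
  have q2: "?q \<ge> 2" using assms(1) prime_ge_2_nat by blast
  hence "u + 2 \<le> card (UNIV :: 'a set)" using assms(2) by simp
  then obtain T :: "'a set" where T: "card T = u + 2" "finite T"
    by (metis obtain_subset_with_card_n)
  define D where "D = (T \<rightarrow>\<^sub>E (UNIV :: 'a set))"
  define M where "M l = restrict (\<lambda>k. \<Sum>t\<in>T. l t * t ^ k) {..u}" for l :: "'a \<Rightarrow> 'a"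
  have MD: "M ` D \<subseteq> {..u} \<rightarrow>\<^sub>E (UNIV :: 'a set)" unfolding M_def by (intro image_subsetI restrict_PiE) auto
  have cD: "card D = ?q ^ (u + 2)" unfolding D_def using T by (simp add: card_PiE)
  have cC: "card ({..u} \<rightarrow>\<^sub>E (UNIV :: 'a set)) = ?q ^ (u + 1)" by (simp add: card_PiE)
  have "\<not> inj_on M D"
  proof
    assume "inj_on M D"
    hence "card D = card (M ` D)" by (simp add: card_image)
    also have "\<dots> \<le> card ({..u} \<rightarrow>\<^sub>E (UNIV :: 'a set))"
      by (rule card_mono[OF _ MD]) (simp add: finite_PiE)
    finally have "?q ^ (u + 2) \<le> ?q ^ (u + 1)" using cD cC by simp
    moreover have "?q ^ (u + 1) < ?q ^ (u + 2)" using q2 by (intro power_strict_increasing) auto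
    ultimately show False by simp
  qed
  then obtain l1 l2 where l: "l1 \<in> D" "l2 \<in> D" "l1 \<noteq> l2" "M l1 = M l2"
    unfolding inj_on_def by blast
  define \<mu> where "\<mu> t = l1 t - l2 t" for t
  obtain t0 where t0: "l1 t0 \<noteq> l2 t0" using l(3) by (auto simp: fun_eq_iff)
  have t0T: "t0 \<in> T" using t0 l(1,2) unfolding D_def by (auto simp: PiE_def extensional_def) (metis)
  have mu0: "\<mu> t0 \<noteq> 0" using t0 by (simp add: \<mu>_def)
  have mom: "(\<Sum>t\<in>T. \<mu> t * t ^ k) = 0" if "k \<le> u" for k
  proof -
    have "M l1 k = M l2 k" using l(4) by simp
    hence "(\<Sum>t\<in>T. l1 t * t ^ k) = (\<Sum>t\<in>T. l2 t * t ^ k)" using that by (simp add: M_def)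
    thus ?thesis by (simp add: \<mu>_def left_diff_distrib sum_subtractf)
  qed
  define y where "y \<alpha> = (\<Sum>t\<in>T. if \<alpha> = (\<chi> i. t) then \<mu> t else 0)" for \<alpha> :: "'a^'n"
  have chi_eq: "((\<chi> i. s) :: 'a^'n) = (\<chi> i. t) \<longleftrightarrow> s = t" for s t
    by (simp add: vec_eq_iff)
  have y0: "y (\<chi> i. t0) = \<mu> t0" unfolding y_def chi_eq using t0T T(2) by simp
  have "supp y \<subseteq> (\<lambda>t. (\<chi> i. t) :: 'a^'n) ` T"
    unfolding supp_def y_def by (auto intro: ccontr simp: image_iff)
  hence "hweight y \<le> u + 2" unfolding hweight_def
    by (metis T card_image_le card_mono finite_imageI le_trans)
  moreover have "y \<noteq> (\<lambda>_. 0)" using y0 mu0 by (metis)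
  moreover have "y \<in> RM_dual u"
    unfolding RM_dual_def
  proof (intro CollectI ballI)
    fix x assume "x \<in> (RM u :: ('a^'n \<Rightarrow> 'a) set)"
    then obtain c where x: "x = poly_eval u c" by (rule RM_E)
    have mv: "mon e ((\<chi> i. t) :: 'a^'n) = t ^ (\<Sum>i\<in>UNIV. e i)" for e t
      by (simp add: mon_def power_sum)
    have "(\<Sum>\<alpha>\<in>UNIV. x \<alpha> * y \<alpha>) = (\<Sum>\<alpha>\<in>UNIV. \<Sum>t\<in>T. if \<alpha> = (\<chi> i. t) then x \<alpha> * \<mu> t else 0)"
      unfolding y_def sum_distrib_left by (intro sum.cong refl) auto
    also have "\<dots> = (\<Sum>t\<in>T. \<Sum>\<alpha>\<in>UNIV. if \<alpha> = (\<chi> i. t) then x \<alpha> * \<mu> t else 0)"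
      by (rule sum.swap)
    also have "\<dots> = (\<Sum>t\<in>T. x (\<chi> i. t) * \<mu> t)" by simp
    also have "\<dots> = (\<Sum>t\<in>T. \<Sum>e\<in>exps u. c e * (\<mu> t * t ^ (\<Sum>i\<in>UNIV. e i)))"
      unfolding x poly_eval_mon mv sum_distrib_right by (simp add: mult_ac)
    also have "\<dots> = (\<Sum>e\<in>exps u. c e * (\<Sum>t\<in>T. \<mu> t * t ^ (\<Sum>i\<in>UNIV. e i)))"
      unfolding sum_distrib_left by (rule sum.swap)
    also have "\<dots> = 0"
      by (intro sum.neutral ballI) (simp add: mom exps_def)
    finally show "(\<Sum>\<alpha>\<in>UNIV. x \<alpha> * y \<alpha>) = 0" .
  qed
  ultimately show ?thesis by blast
qed

theorem lemma1:
  fixes c :: "'a::{finite,field} ^ 'n::finite \<Rightarrow> 'a" and u :: nat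
  assumes "prime (CARD('a))"
    and "u \<le> CARD('a) - 2"
    and "c \<in> RM_dual u" and "c \<noteq> (\<lambda>_. 0)"
    and "\<forall>c' :: 'a ^ 'n \<Rightarrow> 'a. c' \<in> RM_dual u \<and> c' \<noteq> (\<lambda>_. 0) \<longrightarrow> hweight c \<le> hweight c'"
  shows "\<exists>(p :: 'a ^ 'n) (h :: 'a ^ 'n) (t :: nat \<Rightarrow> 'a).
           h \<noteq> 0 \<and> inj_on t {1..u+1} \<and> (\<forall>i\<in>{1..u+1}. t i \<noteq> 0) \<and>
           supp c = insert p ((\<lambda>i. p + t i *s h) ` {1..u+1})"
proof -
  let ?S = "supp c"
  obtain y :: "'a ^ 'n \<Rightarrow> 'a" where y: "y \<in> RM_dual u" "y \<noteq> (\<lambda>_. 0)" "hweight y \<le> u + 2"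
    using exists_light[OF assms(1,2)] by blast
  have cS: "card ?S = u + 2"
    using LB[OF assms(3,4)] assms(5) y unfolding hweight_def by force
  have fin: "finite ?S" by simp
  obtain p where p: "p \<in> ?S" using cS by (metis all_not_in_conv card.empty add_is_0 zero_neq_numeral)
  have cS1: "card (?S - {p}) = u + 1" using cS p by simp
  obtain q2 where q2: "q2 \<in> ?S - {p}" using cS1 by (metis card.empty equals0I add_is_0 one_neq_zero)
  define h where "h = q2 - p"
  have h0: "h \<noteq> 0" using q2 by (simp add: h_def)
  have rex: "\<exists>r. s = p + r *s h" if sS: "s \<in> ?S - {p}" for s
  proof (cases "s = q2")
    case True thus ?thesis by (intro exI[of _ 1]) (simp add: h_def)
  next
    case False
    obtain r where "s - p = r *s (q2 - p)"
      using collinear3[OF assms(3) cS, of s p q2] sS p q2 False by auto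
    thus ?thesis by (intro exI[of _ r]) (simp add: h_def algebra_simps)
  qed
  define r where "r s = (SOME r. s = p + r *s h)" for s
  have r: "s = p + r s *s h" if "s \<in> ?S - {p}" for s
    unfolding r_def by (rule someI_ex) (rule rex[OF that])
  obtain g where g: "bij_betw g {1..u+1} (?S - {p})"
    using ex_bij_betw_nat_finite_1[of "?S - {p}"] cS1 by auto
  define t where "t i = r (g i)" for i
  have gt: "p + t i *s h = g i" if "i \<in> {1..u+1}" for i
    using r[of "g i"] g that unfolding t_def bij_betw_def by (metis (no_types, lifting) DiffE atLeastAtMost_iff image_eqI)
  show ?thesis
  proof (intro exI conjI ballI)
    show "h \<noteq> 0" by (rule h0)
    show "inj_on t {1..u+1}"
    proof (rule inj_onI)
      fix i j assume ij: "i \<in> {1..u+1}" "j \<in> {1..u+1}" "t i = t j"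
      hence "g i = g j" using gt[OF ij(1)] gt[OF ij(2)] by simp
      thus "i = j" using g ij(1,2) unfolding bij_betw_def inj_on_def by blast
    qed
    show "t i \<noteq> 0" if "i \<in> {1..u+1}" for i
    proof
      assume "t i = 0"
      hence "g i = p" using gt[OF that] by simp
      thus False using g that unfolding bij_betw_def by auto
    qed
    have "(\<lambda>i. p + t i *s h) ` {1..u+1} = g ` {1..u+1}"
      using gt by (intro image_cong refl) auto
    also have "\<dots> = ?S - {p}" using g by (simp add: bij_betw_def)
    finally show "?S = insert p ((\<lambda>i. p + t i *s h) ` {1..u+1})" using p by auto
  qed
qed

end
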